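(* For every skew-symmetrizable seed datum $(P,Q)$ there exist skew-symmetrizable seed data $(P',Q')$ and $(P'',Q'')$ and integral linear morphisms $$(P,Q)\xrightarrow{\;A\;}(P',Q')\xleftarrow{\;B\;}(P'',Q'')$$ such that $A$ is injective, $B$ is surjective, and $(P'',Q'')$ is saturated-injective.
   Context: Seed data. A skew-symmetrizable seed datum $(P,Q)$ of rank $r$ consists of: mutually dual finite-rank lattices $M,N$ (pairing $m\cdot n$); homomorphisms $P:\mathbb Z^r\to M$, $Q:\mathbb Z^r\to N$ with $Qe_i\neq0$ for each standard basis vector $e_i$; a lattice $N^\bullet$ such that $N,N^\bullet$ are finite-index sublattices of a common lattice, with dual lattice $M^\bullet$; a diagonal matrix $D=\operatorname{diag}(d_1,\dots,d_r)$, $d_i\in\mathbb Q_{>0}$; and a homomorphism $Q^\bullet:\mathbb Z^r\to N^\bullet$ with $Q=Q^\bullet\circ D$ (maps extended $\mathbb Q$-linearly), such that $B^\bullet_{ij}=(Pe_j)\cdot(Q^\bullet e_i)$ is skew-symmetric. Linear morphisms. For seed data $(P,Q)$ (lattices $M,N$) and $(P',Q')$ (lattices $M',N'$) of the same rank $r$ and same $D$, an integral linear morphism is a homomorphism $A:M\to M'$ with $AP=P'$ and $A^\top Q'=Q$, where $A^\top:N'\to N$ is the adjoint. A homomorphism of lattices is saturated if its image is a saturated sublattice (the quotient by it is torsion-free). $(P,Q)$ is saturated-injective if $P$ and $Q$ are both saturated injections. *)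

theory Defs
  imports "Jordan_Normal_Form.Matrix"
begin

text \<open>A lattice M of rank m is modelled as int^m (int vec of dimension m), with
N = int^m its dual via the standard dot product. Homomorphisms Z^r -> M, Z^r -> N are
m x r integer matrices (columns = images of standard basis vectors). The lattice N-bullet
is modelled as a subgroup of Q^m (= Q tensor N) which, together with N = Z^m, sits with
finite index inside a common lattice: concretely, c Z^m is contained in N-bullet, which is
contained in (1/c) Z^m for some positive integer c.\<close>

record seed =
  sd_dim :: nat
  sd_P :: "int mat"
  sd_Q :: "int mat"
  sd_Nb :: "rat vec set"

definition rat_of_ivec :: "int vec \<Rightarrow> rat vec" where
  "rat_of_ivec v = map_vec of_int v"

definition integral_rvec :: "rat vec \<Rightarrow> bool" where
  "integral_rvec w \<longleftrightarrow> (\<forall>k<dim_vec w. w $ k \<in> \<int>)"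

definition commensurable_lattice :: "nat \<Rightarrow> rat vec set \<Rightarrow> bool" where
  "commensurable_lattice m L \<longleftrightarrow>
     L \<subseteq> carrier_vec m \<and> 0\<^sub>v m \<in> L \<and>
     (\<forall>x\<in>L. \<forall>y\<in>L. x + y \<in> L \<and> - x \<in> L) \<and>
     (\<exists>c::int. c > 0 \<and>
        (\<forall>v\<in>carrier_vec m. of_int c \<cdot>\<^sub>v rat_of_ivec v \<in> L) \<and>
        (\<forall>w\<in>L. integral_rvec (of_int c \<cdot>\<^sub>v w)))"

text \<open>Q-bullet e_i = (1/d_i) Q e_i, as forced by Q = Q-bullet o D.\<close>
definition Qbul_col :: "rat list \<Rightarrow> seed \<Rightarrow> nat \<Rightarrow> rat vec" where
  "Qbul_col D S i = (1 / D ! i) \<cdot>\<^sub>v rat_of_ivec (col (sd_Q S) i)"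

definition Bbul :: "rat list \<Rightarrow> seed \<Rightarrow> nat \<Rightarrow> nat \<Rightarrow> rat" where
  "Bbul D S i j = rat_of_ivec (col (sd_P S) j) \<bullet> Qbul_col D S i"

definition seed_datum :: "nat \<Rightarrow> rat list \<Rightarrow> seed \<Rightarrow> bool" where
  "seed_datum r D S \<longleftrightarrow>
     length D = r \<and> (\<forall>i<r. D ! i > 0) \<and>
     sd_P S \<in> carrier_mat (sd_dim S) r \<and> sd_Q S \<in> carrier_mat (sd_dim S) r \<and>
     (\<forall>i<r. col (sd_Q S) i \<noteq> 0\<^sub>v (sd_dim S)) \<and>
     commensurable_lattice (sd_dim S) (sd_Nb S) \<and>
     (\<forall>i<r. Qbul_col D S i \<in> sd_Nb S) \<and>
     (\<forall>i<r. \<forall>j<r. Bbul D S i j = - Bbul D S j i)"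

definition int_lin_morphism :: "seed \<Rightarrow> seed \<Rightarrow> int mat \<Rightarrow> bool" where
  "int_lin_morphism S S' A \<longleftrightarrow>
     A \<in> carrier_mat (sd_dim S') (sd_dim S) \<and>
     A * sd_P S = sd_P S' \<and> transpose_mat A * sd_Q S' = sd_Q S"

definition mat_injective :: "int mat \<Rightarrow> bool" where
  "mat_injective A \<longleftrightarrow>
     (\<forall>v\<in>carrier_vec (dim_col A). \<forall>w\<in>carrier_vec (dim_col A). A *\<^sub>v v = A *\<^sub>v w \<longrightarrow> v = w)"

definition mat_surjective :: "int mat \<Rightarrow> bool" where
  "mat_surjective A \<longleftrightarrow>
     (\<forall>w\<in>carrier_vec (dim_row A). \<exists>v\<in>carrier_vec (dim_col A). A *\<^sub>v v = w)"

definition mat_saturated :: "int mat \<Rightarrow> bool" where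
  "mat_saturated A \<longleftrightarrow>
     (\<forall>w\<in>carrier_vec (dim_row A). \<forall>k::int. k \<noteq> 0 \<longrightarrow>
        (\<exists>v\<in>carrier_vec (dim_col A). A *\<^sub>v v = k \<cdot>\<^sub>v w) \<longrightarrow>
        (\<exists>v\<in>carrier_vec (dim_col A). A *\<^sub>v v = w))"

definition saturated_injective :: "seed \<Rightarrow> bool" where
  "saturated_injective S \<longleftrightarrow>
     mat_injective (sd_P S) \<and> mat_saturated (sd_P S) \<and>
     mat_injective (sd_Q S) \<and> mat_saturated (sd_Q S)"

end

theory Submission
  imports Defs
begin

lemma mult_entry:
  assumes "A \<in> carrier_mat n k" "B \<in> carrier_mat k l" "i < n" "j < l"
  shows "(A * B) $$ (i,j) = (\<Sum>t<k. A $$ (i,t) * B $$ (t,j))"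
  using assms by (simp add: scalar_prod_def lessThan_atLeast0)

lemma mult_vec_entry:
  assumes "A \<in> carrier_mat n k" "v \<in> carrier_vec k" "i < n"
  shows "(A *\<^sub>v v) $ i = (\<Sum>t<k. A $$ (i,t) * v $ t)"
  using assms by (simp add: scalar_prod_def lessThan_atLeast0)

lemma sum_split_nat: "(\<Sum>t<(a::nat)+b. f t) = (\<Sum>t<a. f t) + (\<Sum>t<b. f (a+t))"
  by (induct b) (auto simp: add.assoc)

lemma delta_sum: "(\<Sum>t<(n::nat). (if t = i then (1::int) else 0) * g t) = (if i < n then g i else 0)"
proof -
  have "(\<Sum>t<n. (if t = i then (1::int) else 0) * g t) = (\<Sum>t\<in>{..<n}. if t = i then g t else 0)"
    by (intro sum.cong) auto
  also have "\<dots> = (if i < n then g i else 0)" by (subst sum.delta) auto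
  finally show ?thesis .
qed

lemma delta_sum2: "(\<Sum>t<(n::nat). (if i = t then (1::int) else 0) * g t) = (if i < n then g i else 0)"
  using delta_sum[where n=n and i=i and g=g] by (simp add: eq_commute[of i])

lemma delta_sum3: "(\<Sum>t<(n::nat). g t * (if t = i then (1::int) else 0)) = (if i < n then g i else 0)"
  using delta_sum[where n=n and i=i and g=g] by (simp add: mult.commute)

lemma exists_c: "\<exists>c::int. c > 0 \<and> (\<forall>x\<in>set xs. of_int c * x \<in> (\<int>::rat set))"
proof (induct xs)
  case Nil then show ?case by (intro exI[of _ 1]) auto
next
  case (Cons x xs)
  then obtain c where c: "c > 0" "\<forall>x\<in>set xs. of_int c * x \<in> (\<int>::rat set)" by auto
  obtain a b where ab: "quotient_of x = (a,b)" by force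
  have b: "b > 0" using quotient_of_denom_pos[OF ab] .
  have x: "x = of_int a / of_int b" using quotient_of_div[OF ab] .
  show ?case
  proof (intro exI[of _ "c*b"] conjI ballI)
    show "c * b > 0" using c b by simp
    fix y assume "y \<in> set (x # xs)"
    then consider "y = x" | "y \<in> set xs" by auto
    then show "of_int (c*b) * y \<in> (\<int>::rat set)"
    proof cases
      case 1 assume "y = x"
      have "of_int (c*b) * x = of_int (c * a)" using b by (simp add: x)
      then have "of_int (c*b) * y = of_int (c * a)" using `y = x` by simp
      then show ?thesis by (metis Ints_of_int)
    next
      case 2 assume "y \<in> set xs"
      then have "of_int c * y \<in> (\<int>::rat set)" using c by auto
      then have "of_int b * (of_int c * y) \<in> (\<int>::rat set)" by (metis Ints_mult Ints_of_int)
      then show ?thesis by (simp add: ac_simps)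
    qed
  qed
qed

definition Lc :: "int \<Rightarrow> nat \<Rightarrow> rat vec set" where
  "Lc c n = {w \<in> carrier_vec n. integral_rvec (of_int c \<cdot>\<^sub>v w)}"

lemma Lc_comm: assumes "c > 0" shows "commensurable_lattice n (Lc c n)"
  unfolding commensurable_lattice_def
proof (intro conjI)
  show "Lc c n \<subseteq> carrier_vec n" unfolding Lc_def by auto
  show "0\<^sub>v n \<in> Lc c n" unfolding Lc_def integral_rvec_def by auto
  show "\<forall>x\<in>Lc c n. \<forall>y\<in>Lc c n. x + y \<in> Lc c n \<and> - x \<in> Lc c n"
    unfolding Lc_def integral_rvec_def by (auto simp: distrib_left)
  show "\<exists>c'. 0 < c' \<and> (\<forall>v\<in>carrier_vec n. of_int c' \<cdot>\<^sub>v rat_of_ivec v \<in> Lc c n) \<and>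
      (\<forall>w\<in>Lc c n. integral_rvec (of_int c' \<cdot>\<^sub>v w))"
    using assms unfolding Lc_def integral_rvec_def rat_of_ivec_def
    by (intro exI[of _ c]) auto
qed

lemma Qbul_Lc:
  assumes "of_int c / d \<in> (\<int>::rat set)" "w \<in> carrier_vec n"
  shows "(1 / d) \<cdot>\<^sub>v rat_of_ivec w \<in> Lc c n"
proof -
  have "\<And>k. k < n \<Longrightarrow> of_int c * ((1/d) * of_int (w $ k)) \<in> (\<int>::rat set)"
  proof -
    fix k assume "k < n"
    have "of_int c * ((1/d) * of_int (w $ k)) = (of_int c * (1/d)) * of_int (w $ k)" by simp
    also have "\<dots> \<in> \<int>"
    proof (rule Ints_mult)
      show "of_int c * (1/d) \<in> (\<int>::rat set)" using assms(1) by simp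
    qed auto
    finally show "of_int c * ((1/d) * of_int (w $ k)) \<in> (\<int>::rat set)" .
  qed
  then show ?thesis using assms(2) unfolding Lc_def integral_rvec_def rat_of_ivec_def by auto
qed

lemma rat_dot: assumes "dim_vec v = dim_vec w"
  shows "rat_of_ivec v \<bullet> (a \<cdot>\<^sub>v rat_of_ivec w) = a * of_int (v \<bullet> w)"
  using assms unfolding rat_of_ivec_def scalar_prod_def
  by (simp add: sum_distrib_left ac_simps)

lemma Bbul_eq:
  assumes "sd_P S \<in> carrier_mat m r" "sd_Q S \<in> carrier_mat m r" "i < r" "j < r"
  shows "Bbul D S i j = (1 / D ! i) * of_int ((transpose_mat (sd_P S) * sd_Q S) $$ (j,i))"
  using assms unfolding Bbul_def Qbul_col_def
  by (subst rat_dot) auto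

lemma Bbul_morph:
  assumes "int_lin_morphism S S' A" "sd_dim S = m" "sd_dim S' = m'"
    "sd_P S \<in> carrier_mat m r" "sd_Q S \<in> carrier_mat m r"
    "sd_P S' \<in> carrier_mat m' r" "sd_Q S' \<in> carrier_mat m' r" "i < r" "j < r"
  shows "Bbul D S i j = Bbul D S' i j"
proof -
  have A: "A \<in> carrier_mat m' m" "A * sd_P S = sd_P S'" "transpose_mat A * sd_Q S' = sd_Q S"
    using assms(1,2,3) unfolding int_lin_morphism_def by auto
  have "transpose_mat (sd_P S) * sd_Q S = transpose_mat (sd_P S) * (transpose_mat A * sd_Q S')"
    using A by simp
  also have "\<dots> = (transpose_mat (sd_P S) * transpose_mat A) * sd_Q S'"
    using A assms by (subst assoc_mult_mat[of _ r m _ m' _ r]) auto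
  also have "\<dots> = transpose_mat (sd_P S') * sd_Q S'"
    using A assms by (simp add: transpose_mult[symmetric, of A m' m _ r])
  finally show ?thesis using Bbul_eq assms by metis
qed

lemma inj_sat:
  assumes M: "M \<in> carrier_mat n r"
    and e: "\<And>j v. j < r \<Longrightarrow> v \<in> carrier_vec r \<Longrightarrow> e j < n \<and> (M *\<^sub>v v) $ e j = v $ j"
  shows "mat_injective M \<and> mat_saturated M"
proof
  show "mat_injective M" unfolding mat_injective_def
  proof (intro ballI impI)
    fix v w assume v: "v \<in> carrier_vec (dim_col M)" and w: "w \<in> carrier_vec (dim_col M)"
      and eq: "M *\<^sub>v v = M *\<^sub>v w"
    show "v = w"
    proof
      show "dim_vec v = dim_vec w" using v w by auto
      fix j assume "j < dim_vec w"
      then have j: "j < r" using w M by auto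
      have v': "v \<in> carrier_vec r" and w': "w \<in> carrier_vec r" using v w M by auto
      have "v $ j = (M *\<^sub>v v) $ e j" using e[OF j v'] by auto
      also have "\<dots> = w $ j" using e[OF j w'] eq by auto
      finally show "v $ j = w $ j" .
    qed
  qed
  show "mat_saturated M" unfolding mat_saturated_def
  proof (intro ballI allI impI)
    fix w k assume w: "w \<in> carrier_vec (dim_row M)" and k: "(k::int) \<noteq> 0"
      and "\<exists>v\<in>carrier_vec (dim_col M). M *\<^sub>v v = k \<cdot>\<^sub>v w"
    then obtain v where v: "v \<in> carrier_vec r" and mv: "M *\<^sub>v v = k \<cdot>\<^sub>v w" using M by auto
    define u where "u = vec r (\<lambda>j. w $ e j)"
    have u: "u \<in> carrier_vec r" unfolding u_def by auto
    have vu: "\<And>t. t < r \<Longrightarrow> v $ t = k * u $ t"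
    proof -
      fix t assume t: "t < r"
      have "v $ t = (M *\<^sub>v v) $ e t" using e[OF t v] by simp
      also have "\<dots> = k * w $ e t" using mv e[OF t v] w M by auto
      finally show "v $ t = k * u $ t" unfolding u_def using t by simp
    qed
    show "\<exists>v\<in>carrier_vec (dim_col M). M *\<^sub>v v = w"
    proof (intro bexI[of _ u])
      show "u \<in> carrier_vec (dim_col M)" using u M by auto
      show "M *\<^sub>v u = w"
      proof
        show "dim_vec (M *\<^sub>v u) = dim_vec w" using w M by auto
        fix i assume "i < dim_vec w"
        then have i: "i < n" using w M by auto
        have "k * w $ i = (M *\<^sub>v v) $ i" using mv i w M by auto
        also have "\<dots> = (\<Sum>t<r. M $$ (i,t) * v $ t)" using mult_vec_entry[OF M v i] .
        also have "\<dots> = k * (\<Sum>t<r. M $$ (i,t) * u $ t)"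
          by (simp add: sum_distrib_left vu ac_simps)
        also have "\<dots> = k * (M *\<^sub>v u) $ i" using mult_vec_entry[OF M u i] by simp
        finally show "(M *\<^sub>v u) $ i = w $ i" using k by simp
      qed
    qed
  qed
qed


definition Am :: "nat \<Rightarrow> nat \<Rightarrow> int mat" where
  "Am m r = mat (m+r) m (\<lambda>(i,j). if i = j then 1 else 0)"
definition P1 :: "nat \<Rightarrow> nat \<Rightarrow> int mat \<Rightarrow> int mat" where
  "P1 m r P = mat (m+r) r (\<lambda>(i,j). if i < m then P $$ (i,j) else 0)"
definition Q1 :: "nat \<Rightarrow> nat \<Rightarrow> int mat \<Rightarrow> int mat" where
  "Q1 m r Q = mat (m+r) r (\<lambda>(i,j). if i < m then Q $$ (i,j) else if i - m = j then 1 else 0)"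
definition P2 :: "nat \<Rightarrow> nat \<Rightarrow> int mat" where
  "P2 m r = mat (r+r+m) r (\<lambda>(i,j). if i = j then 1 else 0)"
definition Q2 :: "nat \<Rightarrow> nat \<Rightarrow> int mat \<Rightarrow> int mat \<Rightarrow> int mat" where
  "Q2 m r P Q = mat (r+r+m) r (\<lambda>(i,j). if i < r then (transpose_mat P * Q) $$ (i,j)
      else if i < r+r then (if i - r = j then 1 else 0) else 0)"
definition Bm :: "nat \<Rightarrow> nat \<Rightarrow> int mat \<Rightarrow> int mat \<Rightarrow> int mat" where
  "Bm m r P Q = mat (m+r) (r+r+m) (\<lambda>(i,k). if i < m then
      (if k < r then P $$ (i,k) else if k < r+r then 0 else if k - (r+r) = i then 1 else 0)
    else (if k < r then 0 else if k < r+r then (if k - r = i - m then 1 else 0)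
      else - Q $$ (k - (r+r), i - m)))"

lemma carriers:
  "Am m r \<in> carrier_mat (m+r) m" "P1 m r P \<in> carrier_mat (m+r) r" "Q1 m r Q \<in> carrier_mat (m+r) r"
  "P2 m r \<in> carrier_mat (r+r+m) r" "Q2 m r P Q \<in> carrier_mat (r+r+m) r"
  "Bm m r P Q \<in> carrier_mat (m+r) (r+r+m)"
  unfolding Am_def P1_def Q1_def P2_def Q2_def Bm_def by auto

lemma A_P: assumes P: "P \<in> carrier_mat m r" shows "Am m r * P = P1 m r P"
proof (rule eq_matI)
  fix i j assume "i < dim_row (P1 m r P)" "j < dim_col (P1 m r P)"
  then have i: "i < m+r" and j: "j < r" by (auto simp: P1_def)
  have "(Am m r * P) $$ (i,j) = (\<Sum>t<m. Am m r $$ (i,t) * P $$ (t,j))"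
    by (rule mult_entry[OF carriers(1) P i j])
  also have "\<dots> = (\<Sum>t<m. (if i = t then 1 else 0) * P $$ (t,j))"
    by (intro sum.cong) (auto simp: Am_def i)
  also have "\<dots> = P1 m r P $$ (i,j)" by (simp add: delta_sum2 P1_def i j)
  finally show "(Am m r * P) $$ (i,j) = P1 m r P $$ (i,j)" .
qed (use P in \<open>auto simp: Am_def P1_def\<close>)

lemma A_Q: assumes Q: "Q \<in> carrier_mat m r" shows "transpose_mat (Am m r) * Q1 m r Q = Q"
proof (rule eq_matI)
  fix i j assume "i < dim_row Q" "j < dim_col Q"
  then have i: "i < m" and j: "j < r" using Q by auto
  have "(transpose_mat (Am m r) * Q1 m r Q) $$ (i,j) = (\<Sum>t<m+r. transpose_mat (Am m r) $$ (i,t) * Q1 m r Q $$ (t,j))"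
    by (rule mult_entry[OF _ carriers(3) i j]) (auto simp: Am_def)
  also have "\<dots> = (\<Sum>t<m+r. (if t = i then 1 else 0) * Q1 m r Q $$ (t,j))"
    by (intro sum.cong) (auto simp: Am_def i)
  also have "\<dots> = Q $$ (i,j)" using i j by (simp add: delta_sum Q1_def)
  finally show "(transpose_mat (Am m r) * Q1 m r Q) $$ (i,j) = Q $$ (i,j)" .
qed (use Q in \<open>auto simp: Am_def Q1_def\<close>)

lemma B_P: shows "Bm m r P Q * P2 m r = P1 m r P"
proof (rule eq_matI)
  fix i j assume "i < dim_row (P1 m r P)" "j < dim_col (P1 m r P)"
  then have i: "i < m+r" and j: "j < r" by (auto simp: P1_def)
  have "(Bm m r P Q * P2 m r) $$ (i,j) = (\<Sum>t<r+r+m. Bm m r P Q $$ (i,t) * P2 m r $$ (t,j))"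
    by (rule mult_entry[OF carriers(6) carriers(4) i j])
  also have "\<dots> = (\<Sum>t<r+r+m. Bm m r P Q $$ (i,t) * (if t = j then 1 else 0))"
    by (intro sum.cong) (auto simp: P2_def j)
  also have "\<dots> = P1 m r P $$ (i,j)" using i j by (simp add: delta_sum3 P1_def Bm_def)
  finally show "(Bm m r P Q * P2 m r) $$ (i,j) = P1 m r P $$ (i,j)" .
qed (auto simp: Bm_def P1_def P2_def)

lemma B_Q: assumes P: "P \<in> carrier_mat m r" and Q: "Q \<in> carrier_mat m r"
  shows "transpose_mat (Bm m r P Q) * Q1 m r Q = Q2 m r P Q"
proof (rule eq_matI)
  fix k j assume "k < dim_row (Q2 m r P Q)" "j < dim_col (Q2 m r P Q)"
  then have k: "k < r+r+m" and j: "j < r" by (auto simp: Q2_def)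
  have "(transpose_mat (Bm m r P Q) * Q1 m r Q) $$ (k,j) =
     (\<Sum>t<m+r. transpose_mat (Bm m r P Q) $$ (k,t) * Q1 m r Q $$ (t,j))"
    by (rule mult_entry[OF _ carriers(3) k j]) (auto simp: Bm_def)
  also have "\<dots> = (\<Sum>t<m+r. Bm m r P Q $$ (t,k) * Q1 m r Q $$ (t,j))"
    by (intro sum.cong) (auto simp: Bm_def k)
  also have "\<dots> = (\<Sum>t<m. Bm m r P Q $$ (t,k) * Q1 m r Q $$ (t,j)) +
      (\<Sum>t<r. Bm m r P Q $$ (m+t,k) * Q1 m r Q $$ (m+t,j))"
    by (rule sum_split_nat)
  also have "\<dots> = Q2 m r P Q $$ (k,j)"
  proof -
    consider "k < r" | "r \<le> k" "k < r+r" | "r+r \<le> k" by linarith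
    then show ?thesis
    proof cases
      case 1
      have "(\<Sum>t<m. Bm m r P Q $$ (t,k) * Q1 m r Q $$ (t,j)) = (\<Sum>t<m. P $$ (t,k) * Q $$ (t,j))"
        by (intro sum.cong) (use k in \<open>auto simp: Bm_def Q1_def 1 j\<close>)
      also have "\<dots> = (transpose_mat P * Q) $$ (k,j)"
        by (subst mult_entry[of _ r m _ r]) (use P Q 1 j in auto)
      finally show ?thesis using 1 j by (simp add: Bm_def Q2_def)
    next
      case 2
      have "(\<Sum>t<m. Bm m r P Q $$ (t,k) * Q1 m r Q $$ (t,j)) = 0"
        by (intro sum.neutral) (use k 2 j in \<open>auto simp: Bm_def\<close>)
      moreover have "(\<Sum>t<r. Bm m r P Q $$ (m+t,k) * Q1 m r Q $$ (m+t,j)) =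
         (\<Sum>t<r. (if t = k - r then 1 else 0) * (if t = j then 1 else 0))"
        by (intro sum.cong) (use k 2 j in \<open>auto simp: Bm_def Q1_def\<close>)
      moreover have "\<dots> = (if k - r = j then 1 else 0)" using 2 j by (simp add: delta_sum)
      ultimately show ?thesis using 2 j by (simp add: Q2_def)
    next
      case 3
      have "(\<Sum>t<m. Bm m r P Q $$ (t,k) * Q1 m r Q $$ (t,j)) =
          (\<Sum>t<m. (if t = k - (r+r) then 1 else 0) * Q $$ (t,j))"
        by (intro sum.cong) (use k 3 j in \<open>auto simp: Bm_def Q1_def\<close>)
      also have "\<dots> = Q $$ (k - (r+r), j)" using 3 k by (simp add: delta_sum)
      finally have s1: "(\<Sum>t<m. Bm m r P Q $$ (t,k) * Q1 m r Q $$ (t,j)) = Q $$ (k - (r+r), j)" .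
      have "(\<Sum>t<r. Bm m r P Q $$ (m+t,k) * Q1 m r Q $$ (m+t,j)) =
         (\<Sum>t<r. (- Q $$ (k - (r+r), t)) * (if t = j then 1 else 0))"
        by (intro sum.cong) (use k 3 j in \<open>auto simp: Bm_def Q1_def\<close>)
      also have "\<dots> = - Q $$ (k - (r+r), j)" using j by (simp add: sum_negf delta_sum3)
      finally show ?thesis using s1 3 j k by (simp add: Q2_def)
    qed
  qed
  finally show "(transpose_mat (Bm m r P Q) * Q1 m r Q) $$ (k,j) = Q2 m r P Q $$ (k,j)" .
qed (auto simp: Bm_def Q1_def Q2_def)


lemma A_inj: "mat_injective (Am m r)"
proof -
  have "mat_injective (Am m r) \<and> mat_saturated (Am m r)"
  proof (rule inj_sat[OF carriers(1), where e = "\<lambda>j. j"])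
    fix j and v :: "int vec" assume j: "j < m" and v: "v \<in> carrier_vec m"
    have "(Am m r *\<^sub>v v) $ j = (\<Sum>t<m. Am m r $$ (j,t) * v $ t)"
      by (rule mult_vec_entry[OF carriers(1) v]) (use j in auto)
    also have "\<dots> = (\<Sum>t<m. (if j = t then 1 else 0) * v $ t)"
      by (intro sum.cong) (use j in \<open>auto simp: Am_def\<close>)
    also have "\<dots> = v $ j" using j by (simp add: delta_sum2)
    finally show "j < m + r \<and> (Am m r *\<^sub>v v) $ j = v $ j" using j by simp
  qed
  then show ?thesis by simp
qed

lemma P2_si: "mat_injective (P2 m r) \<and> mat_saturated (P2 m r)"
proof (rule inj_sat[OF carriers(4), where e = "\<lambda>j. j"])
  fix j and v :: "int vec" assume j: "j < r" and v: "v \<in> carrier_vec r"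
  have "(P2 m r *\<^sub>v v) $ j = (\<Sum>t<r. P2 m r $$ (j,t) * v $ t)"
    by (rule mult_vec_entry[OF carriers(4) v]) (use j in auto)
  also have "\<dots> = (\<Sum>t<r. (if j = t then 1 else 0) * v $ t)"
    by (intro sum.cong) (use j in \<open>auto simp: P2_def\<close>)
  also have "\<dots> = v $ j" using j by (simp add: delta_sum2)
  finally show "j < r + r + m \<and> (P2 m r *\<^sub>v v) $ j = v $ j" using j by simp
qed

lemma Q2_si: "mat_injective (Q2 m r P Q) \<and> mat_saturated (Q2 m r P Q)"
proof (rule inj_sat[OF carriers(5), where e = "\<lambda>j. r + j"])
  fix j and v :: "int vec" assume j: "j < r" and v: "v \<in> carrier_vec r"
  have "(Q2 m r P Q *\<^sub>v v) $ (r+j) = (\<Sum>t<r. Q2 m r P Q $$ (r+j,t) * v $ t)"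
    by (rule mult_vec_entry[OF carriers(5) v]) (use j in auto)
  also have "\<dots> = (\<Sum>t<r. (if j = t then 1 else 0) * v $ t)"
    by (intro sum.cong) (use j in \<open>auto simp: Q2_def\<close>)
  also have "\<dots> = v $ j" using j by (simp add: delta_sum2)
  finally show "r + j < r + r + m \<and> (Q2 m r P Q *\<^sub>v v) $ (r + j) = v $ j" using j by simp
qed

lemma B_surj: assumes P: "P \<in> carrier_mat m r" and Q: "Q \<in> carrier_mat m r"
  shows "mat_surjective (Bm m r P Q)"
  unfolding mat_surjective_def
proof (intro ballI)
  fix w :: "int vec" assume "w \<in> carrier_vec (dim_row (Bm m r P Q))"
  then have w: "w \<in> carrier_vec (m+r)" by (simp add: Bm_def)
  define v where "v = vec (r+r+m) (\<lambda>k. if k < r then 0 else if k < r+r then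
      w $ (m + (k - r)) + (\<Sum>l<m. Q $$ (l, k - r) * w $ l) else w $ (k - (r+r)))"
  have v: "v \<in> carrier_vec (r+r+m)" unfolding v_def by simp
  show "\<exists>v\<in>carrier_vec (dim_col (Bm m r P Q)). Bm m r P Q *\<^sub>v v = w"
  proof (intro bexI[of _ v])
    show "v \<in> carrier_vec (dim_col (Bm m r P Q))" using v by (simp add: Bm_def)
    show "Bm m r P Q *\<^sub>v v = w"
    proof
      show "dim_vec (Bm m r P Q *\<^sub>v v) = dim_vec w" using w by (simp add: Bm_def)
      fix i assume "i < dim_vec w"
      then have i: "i < m + r" using w by simp
      let ?B = "Bm m r P Q"
      have "(?B *\<^sub>v v) $ i = (\<Sum>t<r+r+m. ?B $$ (i,t) * v $ t)"
        by (rule mult_vec_entry[OF carriers(6) v i])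
      also have "\<dots> = (\<Sum>t<r. ?B $$ (i,t) * v $ t) + (\<Sum>t<r. ?B $$ (i,r+t) * v $ (r+t))
          + (\<Sum>t<m. ?B $$ (i,r+r+t) * v $ (r+r+t))"
        by (simp add: sum_split_nat)
      also have "\<dots> = w $ i"
      proof (cases "i < m")
        case True
        have "(\<Sum>t<r. ?B $$ (i,t) * v $ t) = 0"
          by (intro sum.neutral) (use i True in \<open>auto simp: v_def\<close>)
        moreover have "(\<Sum>t<r. ?B $$ (i,r+t) * v $ (r+t)) = 0"
          by (intro sum.neutral) (use i True in \<open>auto simp: Bm_def\<close>)
        moreover have "(\<Sum>t<m. ?B $$ (i,r+r+t) * v $ (r+r+t)) = (\<Sum>t<m. (if i = t then 1 else 0) * w $ t)"
          by (intro sum.cong) (use i True in \<open>auto simp: Bm_def v_def\<close>)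
        moreover have "\<dots> = w $ i" using True by (simp add: delta_sum2)
        ultimately show ?thesis by simp
      next
        case False
        have "(\<Sum>t<r. ?B $$ (i,t) * v $ t) = 0"
          by (intro sum.neutral) (use i False in \<open>auto simp: v_def\<close>)
        moreover have "(\<Sum>t<r. ?B $$ (i,r+t) * v $ (r+t)) =
            (\<Sum>t<r. (if i - m = t then 1 else 0) * (w $ (m + t) + (\<Sum>l<m. Q $$ (l, t) * w $ l)))"
          by (intro sum.cong) (use i False in \<open>auto simp: Bm_def v_def\<close>)
        moreover have "\<dots> = w $ i + (\<Sum>l<m. Q $$ (l, i - m) * w $ l)"
          using i False by (simp add: delta_sum2)
        moreover have "(\<Sum>t<m. ?B $$ (i,r+r+t) * v $ (r+r+t)) = (\<Sum>t<m. - (Q $$ (t, i - m) * w $ t))"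
          by (intro sum.cong) (use i False in \<open>auto simp: Bm_def v_def\<close>)
        moreover have "\<dots> = - (\<Sum>l<m. Q $$ (l, i - m) * w $ l)" by (simp add: sum_negf)
        ultimately show ?thesis by simp
      qed
      finally show "(?B *\<^sub>v v) $ i = w $ i" .
    qed
  qed
qed

lemma Q1_col: "i < r \<Longrightarrow> col (Q1 m r Q) i \<noteq> 0\<^sub>v (m+r)"
proof
  assume i: "i < r" and eq: "col (Q1 m r Q) i = 0\<^sub>v (m+r)"
  have "col (Q1 m r Q) i $ (m+i) = 1" using i by (simp add: Q1_def)
  then show False using eq i by simp
qed

lemma Q2_col: "i < r \<Longrightarrow> col (Q2 m r P Q) i \<noteq> 0\<^sub>v (r+r+m)"
proof
  assume i: "i < r" and eq: "col (Q2 m r P Q) i = 0\<^sub>v (r+r+m)"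
  have "col (Q2 m r P Q) i $ (r+i) = 1" using i by (simp add: Q2_def)
  then show False using eq i by simp
qed

theorem mainTheorem16:
  fixes r :: nat and D :: "rat list" and S :: seed
  assumes "seed_datum r D S"
  shows "\<exists>S' S'' A B. seed_datum r D S' \<and> seed_datum r D S'' \<and>
           int_lin_morphism S S' A \<and> int_lin_morphism S'' S' B \<and>
           mat_injective A \<and> mat_surjective B \<and> saturated_injective S''"
proof -
  define m where "m = sd_dim S"
  define P where "P = sd_P S"
  define Q where "Q = sd_Q S"
  have S: "length D = r" "\<forall>i<r. D ! i > 0" "P \<in> carrier_mat m r" "Q \<in> carrier_mat m r"
     "\<forall>i<r. \<forall>j<r. Bbul D S i j = - Bbul D S j i"
    using assms unfolding seed_datum_def m_def P_def Q_def by blast+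
  obtain c :: int where c: "c > 0" "\<forall>x\<in>set (map inverse D). of_int c * x \<in> (\<int>::rat set)"
    using exists_c by blast
  have cD: "of_int c / D ! i \<in> (\<int>::rat set)" if "i < r" for i
    using c(2) that S(1) by (auto simp: divide_inverse)
  define S' where "S' = \<lparr>sd_dim = m+r, sd_P = P1 m r P, sd_Q = Q1 m r Q, sd_Nb = Lc c (m+r)\<rparr>"
  define S'' where "S'' = \<lparr>sd_dim = r+r+m, sd_P = P2 m r, sd_Q = Q2 m r P Q, sd_Nb = Lc c (r+r+m)\<rparr>"
  have mA: "int_lin_morphism S S' (Am m r)"
    unfolding int_lin_morphism_def S'_def
    using carriers(1) A_P[OF S(3)] A_Q[OF S(4)] by (simp add: m_def P_def Q_def)
  have mB: "int_lin_morphism S'' S' (Bm m r P Q)"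
    unfolding int_lin_morphism_def S'_def S''_def
    using carriers(6) B_P B_Q[OF S(3,4)] by simp
  have BS': "Bbul D S i j = Bbul D S' i j" if "i < r" "j < r" for i j
    by (rule Bbul_morph[OF mA m_def[symmetric], of "m+r"])
      (use S(3,4) that carriers(2,3) in \<open>simp_all add: S'_def P_def Q_def\<close>)
  have BS'': "Bbul D S'' i j = Bbul D S' i j" if "i < r" "j < r" for i j
    by (rule Bbul_morph[OF mB _ _, of "r+r+m" "m+r"])
      (use that carriers(2,3,4,5) in \<open>simp_all add: S'_def S''_def\<close>)
  have sd1: "seed_datum r D S'"
    unfolding seed_datum_def
  proof (intro conjI allI impI)
    show "length D = r" "\<And>i. i < r \<Longrightarrow> D ! i > 0" using S(1,2) by auto
    show "sd_P S' \<in> carrier_mat (sd_dim S') r" "sd_Q S' \<in> carrier_mat (sd_dim S') r"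
      using carriers by (auto simp: S'_def)
    show "\<And>i. i < r \<Longrightarrow> col (sd_Q S') i \<noteq> 0\<^sub>v (sd_dim S')" using Q1_col by (simp add: S'_def)
    show "commensurable_lattice (sd_dim S') (sd_Nb S')" using Lc_comm[OF c(1)] by (simp add: S'_def)
    show "\<And>i. i < r \<Longrightarrow> Qbul_col D S' i \<in> sd_Nb S'"
      unfolding Qbul_col_def S'_def using cD carriers(3) by (auto intro!: Qbul_Lc)
    show "\<And>i j. i < r \<Longrightarrow> j < r \<Longrightarrow> Bbul D S' i j = - Bbul D S' j i"
    proof -
      fix i j assume i: "i < r" and j: "j < r"
      show "Bbul D S' i j = - Bbul D S' j i" using BS'[OF i j] BS'[OF j i] S(5)[rule_format, OF i j] by linarith
    qed
  qed
  have sd2: "seed_datum r D S''"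
    unfolding seed_datum_def
  proof (intro conjI allI impI)
    show "length D = r" "\<And>i. i < r \<Longrightarrow> D ! i > 0" using S(1,2) by auto
    show "sd_P S'' \<in> carrier_mat (sd_dim S'') r" "sd_Q S'' \<in> carrier_mat (sd_dim S'') r"
      using carriers by (auto simp: S''_def)
    show "\<And>i. i < r \<Longrightarrow> col (sd_Q S'') i \<noteq> 0\<^sub>v (sd_dim S'')" using Q2_col by (simp add: S''_def)
    show "commensurable_lattice (sd_dim S'') (sd_Nb S'')" using Lc_comm[OF c(1)] by (simp add: S''_def)
    show "\<And>i. i < r \<Longrightarrow> Qbul_col D S'' i \<in> sd_Nb S''"
      unfolding Qbul_col_def S''_def using cD carriers(5) by (auto intro!: Qbul_Lc)
    show "\<And>i j. i < r \<Longrightarrow> j < r \<Longrightarrow> Bbul D S'' i j = - Bbul D S'' j i"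
    proof -
      fix i j assume i: "i < r" and j: "j < r"
      show "Bbul D S'' i j = - Bbul D S'' j i"
        using BS'[OF i j] BS'[OF j i] BS''[OF i j] BS''[OF j i] S(5)[rule_format, OF i j] by linarith
    qed
  qed
  have si: "saturated_injective S''"
    unfolding saturated_injective_def S''_def using P2_si Q2_si by simp
  show ?thesis
    apply (rule exI[of _ S'], rule exI[of _ S''], rule exI[of _ "Am m r"], rule exI[of _ "Bm m r P Q"])
    using sd1 sd2 mA mB A_inj B_surj[OF S(3,4)] si by simp
qed

end
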